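(* Let $0<q<1$ and write $z=a+\sqrt{-1}\,b$ with $a,b\in\mathbb{R}$. There exist positive constants $c_1=c_1(q)$, $c_2=c_2(q)$ such that: (i) if $a\le-1$, then $|(z;q)_\infty|\ge c_1\exp[c_2\log^2|a|]$; (ii) if $a<1$ and $|b|>1$, then $|(z;q)_\infty|\ge c_1\exp[c_2\log^2|b|]$; (iii) if $a>1$, then $|(z;q)_\infty|\ge c_1\,\max\big(b^2,\,(q^{\alpha-1}-1)(1-q^{\alpha})\big)\exp[c_2\log^2|a|]$, where $\alpha=\lceil\log_{q^{-1}}a\rceil-\log_{q^{-1}}a\in[0,1)$.
   Context: $(z;q)_\infty=\prod_{j\ge0}(1-zq^j)$; $\lceil x\rceil$ is the smallest integer $\ge x$. *)

theory Defs
  imports "HOL-Analysis.Analysis"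
begin

definition qpoch_inf :: "complex \<Rightarrow> real \<Rightarrow> complex" where
  "qpoch_inf z q = (\<Prod>j. (1 - z * complex_of_real q ^ j))"

end

theory Submission
  imports Defs
begin

lemma qp_lim:
  assumes q: "0 < q" "q < (1::real)"
  assumes ev: "\<And>n. n \<ge> N \<Longrightarrow> C \<le> (\<Prod>i<n. norm (1 - z * complex_of_real q ^ i))"
  shows "C \<le> norm (qpoch_inf z q)"
proof -
  let ?f = "\<lambda>i. 1 - z * complex_of_real q ^ i"
  have "summable (\<lambda>i. norm z * q ^ i)"
    using q by (intro summable_mult summable_geometric) auto
  hence "summable (\<lambda>i. norm (?f i - 1))"
    using q by (simp add: norm_mult norm_power)
  hence "convergent_prod ?f"
    by (intro abs_convergent_prod_imp_convergent_prod summable_imp_abs_convergent_prod)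
  hence "(\<lambda>n. \<Prod>i\<le>n. ?f i) \<longlonglongrightarrow> qpoch_inf z q"
    unfolding qpoch_inf_def by (rule convergent_prod_LIMSEQ)
  hence "(\<lambda>n. norm (\<Prod>i\<le>n. ?f i)) \<longlonglongrightarrow> norm (qpoch_inf z q)"
    by (rule tendsto_norm)
  moreover have "\<forall>n\<ge>N. C \<le> norm (\<Prod>i\<le>n. ?f i)"
  proof (intro allI impI)
    fix n assume "n \<ge> N"
    hence "C \<le> (\<Prod>i<Suc n. norm (?f i))" using ev[of "Suc n"] by (simp del: prod.lessThan_Suc)
    also have "\<dots> = norm (\<Prod>i\<le>n. ?f i)"
      by (simp only: prod_norm lessThan_Suc_atMost)
    finally show "C \<le> norm (\<Prod>i\<le>n. ?f i)" .
  qed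
  ultimately show ?thesis by (intro LIMSEQ_le_const) auto
qed

lemma Re_fac: "Re (1 - Complex a b * complex_of_real q ^ j) = 1 - a * q^j"
  by (simp flip: of_real_power)
lemma Im_fac: "Im (1 - Complex a b * complex_of_real q ^ j) = - b * q^j"
  by (simp flip: of_real_power)


lemma sum_real_id: "(\<Sum>j<m. real j) = real m * (real m - 1) / 2"
  by (induction m) (auto simp: algebra_simps)

lemma ineq_aux:
  fixes u m :: real
  assumes "u - 1 \<le> m" "m - 1 \<le> u" "m \<ge> 0" "u \<ge> 0"
  shows "u * (u - 1) / 2 \<le> m * u - m * (m - 1) / 2"
proof -
  have e: "2 * m * u - m * (m - 1) - u * (u - 1) = 2 * u + (m - u) * (1 - (m - u))"
    by (simp add: algebra_simps)
  have "0 \<le> 2 * u + (m - u) * (1 - (m - u))"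
  proof (cases "m \<ge> u")
    case True
    hence "(m - u) * (1 - (m - u)) \<ge> 0" using assms by (intro mult_nonneg_nonneg) auto
    thus ?thesis using assms by linarith
  next
    case False
    have "(m - u) * (1 - (m - u)) = -(u-m) - (u-m)*(u-m)" by (simp add: algebra_simps)
    moreover have "(u-m)*(u-m) \<le> u * (u - m)" using assms False by (intro mult_right_mono) auto
    moreover have "u*(u-m) \<le> u * 1" using assms by (intro mult_left_mono) auto
    ultimately show ?thesis using assms False by linarith
  qed
  thus ?thesis using e by linarith
qed

lemma head:
  assumes q: "0 < q" "q < 1" and y: "y > 0" and l: "l = - ln q" and u: "u = ln y / l"
    and m: "u - 1 \<le> real m" "real m - 1 \<le> u" and u0: "u \<ge> 0"
  shows "exp (l * u * (u - 1) / 2) \<le> (\<Prod>j<m. y * q ^ j)"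
proof -
  have l0: "l > 0" using q l by simp
  have "(\<Prod>j<m. y * q ^ j) = (\<Prod>j<m. exp (ln y - l * real j))"
  proof (intro prod.cong refl)
    fix j
    have "exp (ln y - l * real j) = exp (ln y) * exp (real j * ln q)" using l
      by (simp add: exp_diff exp_add[symmetric] algebra_simps)
    also have "\<dots> = y * q ^ j" using q y by (simp add: exp_of_nat_mult)
    finally show "y * q ^ j = exp (ln y - l * real j)" by simp
  qed
  also have "\<dots> = exp (\<Sum>j<m. ln y - l * real j)" by (simp add: exp_sum)
  also have "(\<Sum>j<m. ln y - l * real j) = real m * ln y - l * (real m * (real m - 1) / 2)"
    by (simp add: sum_subtractf sum_distrib_left[symmetric] sum_real_id)
  finally have P: "(\<Prod>j<m. y * q ^ j) = exp (real m * ln y - l * (real m * (real m - 1) / 2))" .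
  have ly: "ln y = l * u" using u l0 by simp
  have "u * (u - 1) / 2 \<le> real m * u - real m * (real m - 1) / 2"
    using ineq_aux[OF m] u0 by simp
  hence "l * (u * (u - 1) / 2) \<le> l * (real m * u - real m * (real m - 1) / 2)"
    using l0 by (intro mult_left_mono) auto
  hence "l * u * (u - 1) / 2 \<le> real m * ln y - l * (real m * (real m - 1) / 2)"
    using ly by (simp add: algebra_simps)
  thus ?thesis unfolding P by simp
qed

lemma fac_lb:
  assumes "0 < q" "q < (1::real)" "0 \<le> x" "x \<le> q"
  shows "exp (- x / (1 - q)) \<le> 1 - x"
proof -
  define y where "y = x / (1 - q)"
  have y0: "y \<ge> 0" using assms by (simp add: y_def)
  have "1 + y \<le> exp y" by (rule exp_ge_add_one_self)
  hence "exp (-y) \<le> 1 / (1 + y)" using y0 by (simp add: exp_minus field_simps)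
  also have "1 / (1 + y) \<le> 1 - x"
  proof -
    have "x * (1 - q) \<le> x * (1 - x)" using assms by (intro mult_left_mono) auto
    hence "1 \<le> (1 - x) * (1 + y)" using assms unfolding y_def by (simp add: field_simps)
    thus ?thesis using y0 by (simp add: field_simps)
  qed
  finally show ?thesis by (simp add: y_def)
qed

lemma tail:
  assumes q: "0 < q" "q < (1::real)" and x: "\<And>i. i < n \<Longrightarrow> 0 \<le> x i \<and> x i \<le> q ^ (i+1)"
  shows "exp (- 1 / (1 - q)^2) \<le> (\<Prod>i<n. 1 - x i)"
proof -
  have "(\<Sum>i<n. x i) \<le> (\<Sum>i<n. q ^ (i+1))" using x by (intro sum_mono) auto
  also have "\<dots> = q * (\<Sum>i<n. q ^ i)" by (simp add: sum_distrib_left)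
  also have "(\<Sum>i<n. q ^ i) = (1 - q^n) / (1 - q)" using q by (simp add: sum_gp_strict)
  also have "q * ((1 - q^n) / (1 - q)) \<le> 1 / (1 - q)"
  proof -
    have "q^n \<le> 1" "0 \<le> q^n" using q by (auto simp: power_le_one)
    hence "q * (1 - q^n) \<le> 1" using q by (intro mult_le_one) auto
    thus ?thesis using q by (simp add: divide_right_mono)
  qed
  finally have S: "(\<Sum>i<n. x i) \<le> 1 / (1 - q)" .
  have "exp (- 1 / (1 - q)^2) \<le> exp (- (\<Sum>i<n. x i) / (1 - q))"
  proof -
    have "(\<Sum>i<n. x i) / (1 - q) \<le> (1 / (1 - q)) / (1 - q)" using S q by (intro divide_right_mono) auto
    thus ?thesis by (simp add: power2_eq_square)
  qed
  also have "\<dots> = (\<Prod>i<n. exp (- x i / (1 - q)))"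
    by (simp add: exp_sum[symmetric] sum_negf sum_divide_distrib)
  also have "\<dots> \<le> (\<Prod>i<n. 1 - x i)"
  proof (intro prod_mono conjI)
    fix i assume "i \<in> {..<n}"
    hence "0 \<le> x i" "x i \<le> q^(i+1)" using x by auto
    moreover have "q^(i+1) \<le> q" using q by (simp add: power_le_one)
    ultimately have "x i \<le> q" by linarith
    thus "exp (- x i / (1 - q)) \<le> 1 - x i" using q \<open>0 \<le> x i\<close> by (intro fac_lb) auto
  qed auto
  finally show ?thesis .
qed

lemma prod_split:
  fixes m n :: nat
  assumes "m \<le> n"
  shows "(\<Prod>i<n. g i) = (\<Prod>i<m. g i) * (\<Prod>i<n-m. g (m+i))"
  using assms by (induction n rule: dec_induct) (auto simp: Suc_diff_le mult.assoc)

lemma quad: "(A::real) > 0 \<Longrightarrow> A * t^2 - B * t \<ge> -(B^2) / (4*A)"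
proof -
  assume A: "A > 0"
  have "0 \<le> A * (t - B/(2*A))^2" using A by simp
  also have "\<dots> = A*t^2 - B*t + B^2/(4*A)" using A by (simp add: power2_eq_square field_simps)
  finally show ?thesis by simp
qed


lemma gRe: "1 - a * q^j \<le> norm (1 - Complex a b * complex_of_real q ^ j)"
  using abs_Re_le_cmod[of "1 - Complex a b * complex_of_real q ^ j"] by (simp only: Re_fac)
lemma gRe': "\<bar>1 - a * q^j\<bar> \<le> norm (1 - Complex a b * complex_of_real q ^ j)"
  using abs_Re_le_cmod[of "1 - Complex a b * complex_of_real q ^ j"] by (simp only: Re_fac)
lemma gIm: "q \<ge> 0 \<Longrightarrow> \<bar>b\<bar> * q^j \<le> norm (1 - Complex a b * complex_of_real q ^ j)"
  using abs_Im_le_cmod[of "1 - Complex a b * complex_of_real q ^ j"] by (simp add: Im_fac abs_mult)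

lemma caseI:
  assumes q: "0 < q" "q < 1" and a: "a \<le> -1" and l: "l = - ln q" and u: "u = ln \<bar>a\<bar> / l"
  shows "exp (l * u * (u - 1) / 2) \<le> norm (qpoch_inf (Complex a b) q)"
proof -
  have l0: "l > 0" using q l by simp
  have u0: "u \<ge> 0" using a l0 u by simp
  define m where "m = nat \<lfloor>u\<rfloor>"
  have rm: "real m = of_int \<lfloor>u\<rfloor>" using u0 by (simp add: m_def)
  have m1: "u - 1 \<le> real m" "real m - 1 \<le> u" unfolding rm by linarith+
  define g where "g j = norm (1 - Complex a b * complex_of_real q ^ j)" for j
  have g1: "1 \<le> g j" for j
  proof -
    have "1 \<le> 1 - a * q^j" using a q by (simp add: mult_nonpos_nonneg)
    thus ?thesis using gRe[of a q j b] by (simp add: g_def)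
  qed
  have gy: "\<bar>a\<bar> * q^j \<le> g j" for j
  proof -
    have "\<bar>a\<bar> * q^j \<le> 1 - a * q^j" using a q by simp
    thus ?thesis using gRe[of a q j b] by (simp add: g_def)
  qed
  show ?thesis
  proof (rule qp_lim[OF q, where N = m])
    fix n assume n: "n \<ge> m"
    have "exp (l * u * (u - 1) / 2) \<le> (\<Prod>j<m. \<bar>a\<bar> * q ^ j)"
      using head[OF q _ l u m1 u0] a by simp
    also have "\<dots> \<le> (\<Prod>j<m. g j)" using gy q by (intro prod_mono) auto
    also have "\<dots> \<le> (\<Prod>j<m. g j) * (\<Prod>i<n-m. g (m+i))"
    proof -
      have T1: "1 \<le> (\<Prod>i<n-m. g (m+i))" using g1 by (intro prod_ge_1) auto
      have P0: "0 \<le> (\<Prod>j<m. g j)" by (intro prod_nonneg) (simp add: g_def)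
      show ?thesis using mult_left_mono[OF T1 P0] by simp
    qed
    also have "\<dots> = (\<Prod>i<n. g i)" using prod_split[OF n, of g] by simp
    finally show "exp (l * u * (u - 1) / 2) \<le> (\<Prod>i<n. norm (1 - Complex a b * complex_of_real q ^ i))"
      by (simp add: g_def)
  qed
qed

lemma caseII:
  assumes q: "0 < q" "q < 1" and a: "a < 1" and b: "\<bar>b\<bar> > 1" and l: "l = - ln q"
    and u: "u = ln \<bar>b\<bar> / l"
  shows "exp (l * u * (u - 1) / 2) * exp (- 1 / (1 - q)^2) \<le> norm (qpoch_inf (Complex a b) q)"
proof -
  have l0: "l > 0" using q l by simp
  have u0: "u \<ge> 0" using b l0 u by simp
  define m where "m = nat \<lfloor>u\<rfloor> + 1"
  have rm: "real m = of_int \<lfloor>u\<rfloor> + 1" using u0 by (simp add: m_def)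
  have m1: "u - 1 \<le> real m" "real m - 1 \<le> u" unfolding rm by linarith+
  have m0: "m \<ge> 1" by (simp add: m_def)
  define g where "g j = norm (1 - Complex a b * complex_of_real q ^ j)" for j
  have g1: "1 - q^j \<le> g j" for j
  proof -
    have "a * q^j \<le> 1 * q^j" using a q by (intro mult_right_mono) auto
    thus ?thesis using gRe[of a q j b] by (simp add: g_def)
  qed
  have gy: "\<bar>b\<bar> * q^j \<le> g j" for j using gIm[of q b j a] q by (simp add: g_def)
  show ?thesis
  proof (rule qp_lim[OF q, where N = m])
    fix n assume n: "n \<ge> m"
    have H: "exp (l * u * (u - 1) / 2) \<le> (\<Prod>j<m. g j)"
    proof -
      have "exp (l * u * (u - 1) / 2) \<le> (\<Prod>j<m. \<bar>b\<bar> * q ^ j)"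
        using head[OF q _ l u m1 u0] b by simp
      also have "\<dots> \<le> (\<Prod>j<m. g j)" using gy q by (intro prod_mono) auto
      finally show ?thesis .
    qed
    have T: "exp (- 1 / (1 - q)^2) \<le> (\<Prod>i<n-m. g (m+i))"
    proof -
      have "exp (- 1 / (1 - q)^2) \<le> (\<Prod>i<n-m. 1 - q^(m+i))"
      proof (rule tail[OF q])
        fix i
        have "q^(m+i) \<le> q^(i+1)" using q m0 by (intro power_decreasing) auto
        thus "0 \<le> q^(m+i) \<and> q^(m+i) \<le> q^(i+1)" using q by simp
      qed
      also have "\<dots> \<le> (\<Prod>i<n-m. g (m+i))"
        using g1 q by (intro prod_mono) (auto simp: power_le_one)
      finally show ?thesis .
    qed
    have "exp (l * u * (u - 1) / 2) * exp (- 1 / (1 - q)^2) \<le> (\<Prod>j<m. g j) * (\<Prod>i<n-m. g (m+i))"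
      using H T by (intro mult_mono prod_nonneg) (auto simp: g_def)
    also have "\<dots> = (\<Prod>i<n. g i)" using prod_split[OF n, of g] by simp
    finally show "exp (l * u * (u - 1) / 2) * exp (- 1 / (1 - q)^2) \<le> (\<Prod>i<n. norm (1 - Complex a b * complex_of_real q ^ i))"
      by (simp add: g_def)
  qed
qed


lemma caseIII:
  assumes q: "0 < q" "q < 1" and a: "a > 1" and l: "l = - ln q" and t: "t = ln a"
    and u: "u = t / l" and al: "\<alpha> = of_int \<lceil>u\<rceil> - u" and mu: "mu = - ln (1 - q)"
  shows "exp (- mu * u) * exp (l * u * (u - 1) / 2) *
           (max (b^2) ((q powr (\<alpha> - 1) - 1) * (1 - q powr \<alpha>)) * (q^2 * exp (-2 * t)))
           * exp (- 1 / (1 - q)^2) \<le> norm (qpoch_inf (Complex a b) q)"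
proof -
  have l0: "l > 0" using q l by simp
  have t0: "t > 0" using a t by simp
  have u0: "u > 0" using t0 l0 u by simp
  have mu0: "mu \<ge> 0" using q mu by simp
  have cc: "of_int \<lceil>u\<rceil> - 1 < u" "u \<le> of_int \<lceil>u\<rceil>" using ceiling_correct[of u] by auto
  have c1: "\<lceil>u\<rceil> \<ge> 1" using u0 by simp
  define m where "m = nat (\<lceil>u\<rceil> - 1)"
  have rm: "real m = u + \<alpha> - 1" using c1 al by (simp add: m_def)
  have al01: "0 \<le> \<alpha>" "\<alpha> < 1" using al cc by auto
  have aexp: "a = exp (l * u)" using u l0 t a by simp
  have qexp: "q ^ j = exp (- l * real j)" for j
  proof -
    have "q ^ j = exp (ln q) ^ j" using q by simp
    also have "\<dots> = exp (real j * ln q)" by (simp add: exp_of_nat_mult)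
    finally show ?thesis using l by (simp add: mult.commute)
  qed
  have aq: "a * q ^ j = exp (l * (u - real j))" for j
    by (simp add: aexp qexp exp_add[symmetric] algebra_simps)
  have pw: "q powr x = exp (- l * x)" for x
    using q l by (simp add: powr_def mult.commute)
  have am: "a * q ^ m = q powr (\<alpha> - 1)" unfolding aq pw by (simp add: rm algebra_simps)
  have am1: "a * q ^ Suc m = q powr \<alpha>" unfolding aq pw by (simp add: rm algebra_simps)
  define g where "g j = norm (1 - Complex a b * complex_of_real q ^ j)" for j
  have g0: "0 \<le> g j" for j by (simp add: g_def)
  have gh: "(1 - q) * (a * q ^ j) \<le> g j" if j: "j < m" for j
  proof -
    have "q * (a * q ^ j) = a * q ^ Suc j" by simp
    also have "\<dots> = exp (l * (u - real (Suc j)))" by (rule aq)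
    also have "\<dots> \<ge> 1" using l0 j rm al01 by (subst one_le_exp_iff) (intro mult_nonneg_nonneg; simp)
    finally have "1 \<le> q * (a * q ^ j)" .
    hence "(1 - q) * (a * q ^ j) \<le> \<bar>1 - a * q ^ j\<bar>" by (simp add: algebra_simps)
    thus ?thesis using gRe'[of a q j b] by (simp add: g_def)
  qed
  have H: "exp (- mu * u) * exp (l * u * (u - 1) / 2) \<le> (\<Prod>j<m. g j)"
  proof -
    have e1: "exp (- mu * u) \<le> (1 - q) ^ m"
    proof -
      have "(1 - q) ^ m = exp (ln (1 - q)) ^ m" using q by simp
      also have "\<dots> = exp (- mu * real m)" using mu by (simp add: exp_of_nat_mult[symmetric] mult.commute)
      finally have "(1 - q) ^ m = exp (- mu * real m)" .
      moreover have "mu * real m \<le> mu * u" using mu0 rm al01 by (intro mult_left_mono) auto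
      ultimately show ?thesis by simp
    qed
    have e2: "exp (l * u * (u - 1) / 2) \<le> (\<Prod>j<m. a * q ^ j)"
      by (rule head[OF q _ l]) (use a t u rm al01 u0 in auto)
    have "exp (- mu * u) * exp (l * u * (u - 1) / 2) \<le> (1 - q) ^ m * (\<Prod>j<m. a * q ^ j)"
      using e1 e2 q by (intro mult_mono) auto
    also have "\<dots> = (\<Prod>j<m. (1 - q) * (a * q ^ j))" by (simp add: prod.distrib)
    also have "\<dots> \<le> (\<Prod>j<m. g j)" using gh q a by (intro prod_mono) auto
    finally show ?thesis .
  qed
  define P where "P = (q powr (\<alpha> - 1) - 1) * (1 - q powr \<alpha>)"
  define c where "c = q^2 * exp (-2 * t)"
  have pa1: "1 \<le> q powr (\<alpha> - 1)" unfolding pw using l0 al01 mult_pos_neg[of l "\<alpha> - 1"] by simp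
  have pa2: "q powr \<alpha> \<le> 1" unfolding pw using l0 al01 by simp
  have pa3: "q \<le> q powr \<alpha>"
  proof -
    have "q = exp (- l * 1)" using q l by simp
    also have "\<dots> \<le> exp (- l * \<alpha>)" using l0 al01 by simp
    finally show ?thesis by (simp add: pw)
  qed
  have P0: "0 \<le> P" using pa1 pa2 by (simp add: P_def)
  have gm1: "q powr (\<alpha> - 1) - 1 \<le> g m" using gRe'[of a q m b] am pa1 by (simp add: g_def)
  have gm2: "\<bar>b\<bar> * q ^ m \<le> g m" using gIm[of q b m a] q by (simp add: g_def)
  have gs1: "1 - q powr \<alpha> \<le> g (Suc m)" using gRe[of a q "Suc m" b] am1 by (simp add: g_def)
  have gs2: "\<bar>b\<bar> * q ^ Suc m \<le> g (Suc m)" using gIm[of q b "Suc m" a] q by (simp add: g_def)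
  have qs: "q * exp (- t) \<le> q ^ Suc m"
  proof -
    have e: "exp (- t) * a = 1" using t a by (simp add: exp_minus)
    have "q ^ Suc m = (exp (- t) * a) * q ^ Suc m" using e by simp
    also have "\<dots> = exp (- t) * q powr \<alpha>" using am1 by (simp only: mult.assoc)
    also have "\<dots> \<ge> exp (- t) * q" using pa3 by (intro mult_left_mono) auto
    finally show ?thesis by (simp add: mult.commute)
  qed
  have qm: "q ^ Suc m \<le> q ^ m" using q by (simp add: mult_left_le_one_le)
  have M1: "P \<le> g m * g (Suc m)"
    unfolding P_def using gm1 gs1 pa1 pa2 by (intro mult_mono) auto
  have M2: "b^2 * c \<le> g m * g (Suc m)"
  proof -
    have X: "\<bar>b\<bar> * (q * exp (- t)) \<le> \<bar>b\<bar> * q ^ Suc m" using qs by (intro mult_left_mono) auto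
    have X2: "\<bar>b\<bar> * (q * exp (- t)) \<le> \<bar>b\<bar> * q ^ m" using qs qm by (intro mult_left_mono) auto
    have "b^2 * c = (\<bar>b\<bar> * (q * exp (- t))) * (\<bar>b\<bar> * (q * exp (- t)))"
      unfolding c_def by (simp add: power2_eq_square exp_add[symmetric] algebra_simps)
    also have "\<dots> \<le> g m * g (Suc m)"
      using X X2 gm2 gs2 q g0 by (intro mult_mono) auto
    finally show ?thesis .
  qed
  have c01: "0 \<le> c" "c \<le> 1" unfolding c_def using q t0 by (auto intro!: mult_le_one simp: power_le_one)
  have Mid: "max (b^2) P * c \<le> g m * g (Suc m)"
  proof (cases "b^2 \<le> P")
    case True
    hence "max (b^2) P * c = P * c" by simp
    also have "\<dots> \<le> P" using P0 c01 by (simp add: mult_left_le)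
    finally show ?thesis using M1 by simp
  next
    case False thus ?thesis using M2 by simp
  qed
  have T: "exp (- 1 / (1 - q)^2) \<le> (\<Prod>i<k. g (Suc (Suc m) + i))" for k
  proof -
    have "exp (- 1 / (1 - q)^2) \<le> (\<Prod>i<k. 1 - q powr \<alpha> * q^(i+1))"
    proof (rule tail[OF q])
      fix i
      have "q powr \<alpha> * q^(i+1) \<le> 1 * q^(i+1)" using pa2 q by (intro mult_right_mono) auto
      thus "0 \<le> q powr \<alpha> * q^(i+1) \<and> q powr \<alpha> * q^(i+1) \<le> q^(i+1)" using q by simp
    qed
    also have "\<dots> \<le> (\<Prod>i<k. g (Suc (Suc m) + i))"
    proof (intro prod_mono conjI)
      fix i
      have "a * q ^ (Suc (Suc m) + i) = q powr \<alpha> * q^(i+1)"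
        unfolding am1[symmetric] by (simp add: power_add mult_ac)
      hence "1 - q powr \<alpha> * q^(i+1) = 1 - a * q ^ (Suc (Suc m) + i)" by linarith
      thus "1 - q powr \<alpha> * q^(i+1) \<le> g (Suc (Suc m) + i)"
        using gRe[of a q "Suc (Suc m) + i" b] unfolding g_def by linarith
      have "q powr \<alpha> * q^(i+1) \<le> 1 * 1" using pa2 q by (intro mult_mono) (auto simp del: power_Suc simp add: power_le_one)
      thus "0 \<le> 1 - q powr \<alpha> * q^(i+1)" by simp
    qed
    finally show ?thesis .
  qed
  show ?thesis
  proof (rule qp_lim[OF q, where N = "Suc (Suc m)"])
    fix n assume n: "n \<ge> Suc (Suc m)"
    have "exp (- mu * u) * exp (l * u * (u - 1) / 2) * (max (b^2) P * c) * exp (- 1 / (1 - q)^2)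
          \<le> (\<Prod>j<m. g j) * (g m * g (Suc m)) * (\<Prod>i<n - Suc (Suc m). g (Suc (Suc m) + i))"
    proof (rule mult_mono)
      show "exp (- mu * u) * exp (l * u * (u - 1) / 2) * (max (b^2) P * c) \<le> (\<Prod>j<m. g j) * (g m * g (Suc m))"
        by (rule mult_mono[OF H Mid]) (use c01 P0 in \<open>auto simp: g0 prod_nonneg\<close>)
      show "exp (- 1 / (1 - q)^2) \<le> (\<Prod>i<n - Suc (Suc m). g (Suc (Suc m) + i))" by (rule T)
      show "0 \<le> (\<Prod>j<m. g j) * (g m * g (Suc m))" by (auto simp: g0 prod_nonneg)
    qed simp
    also have "\<dots> = (\<Prod>i<n. g i)"
      using prod_split[OF n, of g] by (simp add: mult.assoc)
    finally show "exp (- mu * u) * exp (l * u * (u - 1) / 2) *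
           (max (b^2) ((q powr (\<alpha> - 1) - 1) * (1 - q powr \<alpha>)) * (q^2 * exp (-2 * t)))
           * exp (- 1 / (1 - q)^2) \<le> (\<Prod>i<n. norm (1 - Complex a b * complex_of_real q ^ i))"
      by (simp add: g_def P_def c_def)
  qed
qed


theorem lemmaC1:
  fixes q :: real
  assumes "0 < q" "q < 1"
  shows "\<exists>c1 > 0. \<exists>c2 > 0. \<forall>a b :: real.
     (a \<le> -1 \<longrightarrow>
        norm (qpoch_inf (Complex a b) q) \<ge> c1 * exp (c2 * (ln \<bar>a\<bar>)^2)) \<and>
     (a < 1 \<and> \<bar>b\<bar> > 1 \<longrightarrow>
        norm (qpoch_inf (Complex a b) q) \<ge> c1 * exp (c2 * (ln \<bar>b\<bar>)^2)) \<and>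
     (a > 1 \<longrightarrow>
        (let \<alpha> = real_of_int \<lceil>log (1/q) a\<rceil> - log (1/q) a in
          norm (qpoch_inf (Complex a b) q) \<ge>
            c1 * max (b^2) ((q powr (\<alpha> - 1) - 1) * (1 - q powr \<alpha>))
               * exp (c2 * (ln \<bar>a\<bar>)^2)))"
proof -
  note q = assms
  define l where "l = - ln q"
  have l0: "l > 0" using q by (simp add: l_def)
  define mu where "mu = - ln (1 - q)"
  have mu0: "mu \<ge> 0" using q by (simp add: mu_def)
  define K where "K = 1 / (1 - q)^2"
  define B where "B = 3 + mu / l"
  have B3: "B \<ge> 3" using mu0 l0 by (simp add: B_def)
  define c2 where "c2 = 1 / (4 * l)"
  have c20: "c2 > 0" using l0 by (simp add: c2_def)
  define c1 where "c1 = q^2 * exp (- K) * exp (- (B^2) * l)"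
  have c10: "c1 > 0" using q by (simp add: c1_def)
  have E: "exp (- (B^2) * l) * exp (c2 * t^2) \<le> exp (t^2 / (2 * l) - s * t)"
    if t: "t \<ge> 0" and s: "s \<le> B" for t s
  proof -
    have Q: "c2 * t^2 - B * t \<ge> -(B^2) / (4 * c2)" by (rule quad[OF c20])
    have Q2: "-(B^2) / (4 * c2) = - (B^2) * l" using l0 by (simp add: c2_def)
    have st: "s * t \<le> B * t" using s t by (intro mult_right_mono) auto
    have "t^2 / (2 * l) = 2 * (c2 * t^2)" using l0 by (simp add: c2_def field_simps)
    hence "- (B^2) * l + c2 * t^2 \<le> t^2 / (2 * l) - s * t" using Q Q2 st by linarith
    thus ?thesis by (simp add: exp_add[symmetric])
  qed
  have qK: "q^2 * exp (- K) \<le> 1"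
  proof -
    have "q^2 \<le> 1" using q by (simp add: power_le_one)
    moreover have "exp (- K) \<le> 1" by (simp add: K_def)
    ultimately show ?thesis using q by (intro mult_le_one) auto
  qed
  have c1le: "c1 \<le> exp (- (B^2) * l)"
    using mult_right_mono[OF qK, of "exp (- (B^2) * l)"] by (simp add: c1_def)
  have c1le2: "c1 \<le> exp (- K) * exp (- (B^2) * l)"
  proof -
    have "q^2 \<le> 1" using q by (simp add: power_le_one)
    thus ?thesis using mult_right_mono[of "q^2" 1 "exp (- K) * exp (- (B^2) * l)"]
      by (simp add: c1_def mult.assoc)
  qed
  show ?thesis
  proof (rule exI[of _ c1], rule conjI[OF c10], rule exI[of _ c2], rule conjI[OF c20], intro allI conjI impI)
    fix a b :: real
    assume a: "a \<le> -1"
    define t where "t = ln \<bar>a\<bar>"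
    have t0: "t \<ge> 0" using a by (simp add: t_def)
    have I: "exp (l * (t / l) * (t / l - 1) / 2) \<le> norm (qpoch_inf (Complex a b) q)"
      by (rule caseI[OF q a l_def]) (simp add: t_def)
    have eq: "l * (t / l) * (t / l - 1) / 2 = t^2 / (2 * l) - (1/2) * t"
      using l0 by (simp add: field_simps power2_eq_square)
    have "c1 * exp (c2 * t^2) \<le> exp (- (B^2) * l) * exp (c2 * t^2)"
      using c1le by (intro mult_right_mono) auto
    also have "\<dots> \<le> exp (t^2 / (2 * l) - (1/2) * t)" using E[OF t0, of "1/2"] B3 by simp
    also have "\<dots> \<le> norm (qpoch_inf (Complex a b) q)" using I unfolding eq .
    finally show "c1 * exp (c2 * (ln \<bar>a\<bar>)^2) \<le> norm (qpoch_inf (Complex a b) q)"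
      by (simp only: t_def)
  next
    fix a b :: real
    assume ab: "a < 1 \<and> \<bar>b\<bar> > 1"
    define t where "t = ln \<bar>b\<bar>"
    have t0: "t \<ge> 0" using ab by (simp add: t_def)
    have I: "exp (l * (t / l) * (t / l - 1) / 2) * exp (- 1 / (1 - q)^2) \<le> norm (qpoch_inf (Complex a b) q)"
      by (rule caseII[OF q _ _ l_def]) (use ab in \<open>simp_all add: t_def\<close>)
    have eq: "l * (t / l) * (t / l - 1) / 2 = t^2 / (2 * l) - (1/2) * t"
      using l0 by (simp add: field_simps power2_eq_square)
    have "c1 * exp (c2 * t^2) \<le> exp (- K) * exp (- (B^2) * l) * exp (c2 * t^2)"
      using c1le2 by (intro mult_right_mono) auto
    also have "\<dots> \<le> exp (- K) * exp (t^2 / (2 * l) - (1/2) * t)"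
      using E[OF t0, of "1/2"] B3 by (simp add: mult.assoc)
    also have "\<dots> \<le> norm (qpoch_inf (Complex a b) q)" using I unfolding eq by (simp add: K_def mult.commute)
    finally show "c1 * exp (c2 * (ln \<bar>b\<bar>)^2) \<le> norm (qpoch_inf (Complex a b) q)"
      by (simp only: t_def)
  next
    fix a b :: real
    assume a: "a > 1"
    define t where "t = ln a"
    have t0: "t \<ge> 0" using a by (simp add: t_def)
    define u where "u = t / l"
    have lg: "log (1/q) a = u" using q by (simp add: log_def u_def t_def l_def ln_div)
    define \<alpha> where "\<alpha> = real_of_int \<lceil>u\<rceil> - u"
    define Mx where "Mx = max (b^2) ((q powr (\<alpha> - 1) - 1) * (1 - q powr \<alpha>))"
    have Mx0: "Mx \<ge> 0" unfolding Mx_def by (rule order_trans[OF zero_le_power2 max.cobounded1])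
    have I: "exp (- mu * u) * exp (l * u * (u - 1) / 2) * (Mx * (q^2 * exp (-2 * t))) * exp (- 1 / (1 - q)^2)
        \<le> norm (qpoch_inf (Complex a b) q)"
      unfolding Mx_def by (rule caseIII[OF q a l_def t_def u_def \<alpha>_def mu_def])
    have eq: "exp (- mu * u) * exp (l * u * (u - 1) / 2) * (Mx * (q^2 * exp (-2 * t))) * exp (- 1 / (1 - q)^2)
       = Mx * q^2 * exp (- K) * exp (t^2 / (2 * l) - (5/2 + mu / l) * t)"
    proof -
      have "- mu * u + l * u * (u - 1) / 2 + (-2 * t) = t^2 / (2 * l) - (5/2 + mu / l) * t"
        using l0 by (simp add: u_def field_simps power2_eq_square)
      hence "exp (- mu * u) * exp (l * u * (u - 1) / 2) * exp (-2 * t) = exp (t^2 / (2 * l) - (5/2 + mu / l) * t)"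
        by (simp add: exp_add[symmetric])
      thus ?thesis by (simp add: K_def algebra_simps)
    qed
    have "c1 * Mx * exp (c2 * t^2) = Mx * q^2 * exp (- K) * (exp (- (B^2) * l) * exp (c2 * t^2))"
      by (simp add: c1_def algebra_simps)
    also have "\<dots> \<le> Mx * q^2 * exp (- K) * exp (t^2 / (2 * l) - (5/2 + mu / l) * t)"
      using E[OF t0, of "5/2 + mu / l"] Mx0 by (intro mult_left_mono) (auto simp: B_def)
    also have "\<dots> = exp (- mu * u) * exp (l * u * (u - 1) / 2) * (Mx * (q^2 * exp (-2 * t))) * exp (- 1 / (1 - q)^2)"
      by (rule eq[symmetric])
    also have "\<dots> \<le> norm (qpoch_inf (Complex a b) q)" by (rule I)
    finally have "c1 * Mx * exp (c2 * t^2) \<le> norm (qpoch_inf (Complex a b) q)" .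
    thus "let \<alpha> = real_of_int \<lceil>log (1/q) a\<rceil> - log (1/q) a in
          norm (qpoch_inf (Complex a b) q) \<ge>
            c1 * max (b^2) ((q powr (\<alpha> - 1) - 1) * (1 - q powr \<alpha>))
               * exp (c2 * (ln \<bar>a\<bar>)^2)"
      using a by (simp add: lg Let_def Mx_def \<alpha>_def t_def)
  qed
qed

end
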